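(* Let $K$ be a field of characteristic zero and $n\ge3$. Let $i\in\{1,3,5,\dots,n-2\}$ if $n$ is odd, or $i\in\{2,4,6,\dots,n-2\}$ if $n$ is even. Then there exists a filiform Lie algebra $\mathfrak{g}$ over $K$ of dimension $n$ with $\chi(\mathfrak{g})=i$.
   Context: A filiform Lie algebra of dimension $n$ is a nilpotent Lie algebra with $\dim\mathfrak{g}^k=n-k$ for $2\le k\le n$ (lower central series $\mathfrak{g}^1=\mathfrak{g}$, $\mathfrak{g}^{k+1}=[\mathfrak{g},\mathfrak{g}^k]$). For $\ell\in\mathfrak{g}^*$, $\mathfrak{g}(\ell)=\{y\in\mathfrak{g}\mid\ell([x,y])=0\ \forall x\in\mathfrak{g}\}$ and $\chi(\mathfrak{g})=\min_{\ell\in\mathfrak{g}^*}\dim\mathfrak{g}(\ell)$. *)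

theory Defs
  imports Complex_Main "HOL-Library.Function_Algebras"
begin

text \<open>An n-dimensional vector space over a field K is modelled (up to isomorphism) by
  the K-valued sequences supported on {0..<n}; a Lie algebra of dimension n over K is
  this space together with a bilinear, alternating bracket satisfying Jacobi.\<close>

definition sc :: "'a::field \<Rightarrow> (nat \<Rightarrow> 'a) \<Rightarrow> (nat \<Rightarrow> 'a)" where
  "sc c x = (\<lambda>i. c * x i)"

definition Vn :: "nat \<Rightarrow> (nat \<Rightarrow> 'a::field) set" where
  "Vn n = {x. \<forall>i\<ge>n. x i = 0}"

definition span_n :: "(nat \<Rightarrow> 'a::field) set \<Rightarrow> (nat \<Rightarrow> 'a) set" where
  "span_n S = Modules.module.span sc S"

definition dim_n :: "(nat \<Rightarrow> 'a::field) set \<Rightarrow> nat" where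
  "dim_n S = Vector_Spaces.vector_space.dim sc S"

definition is_lie_bracket ::
  "nat \<Rightarrow> ((nat \<Rightarrow> 'a::field) \<Rightarrow> (nat \<Rightarrow> 'a) \<Rightarrow> (nat \<Rightarrow> 'a)) \<Rightarrow> bool" where
  "is_lie_bracket n b \<longleftrightarrow>
     (\<forall>x\<in>Vn n. \<forall>y\<in>Vn n. b x y \<in> Vn n) \<and>
     (\<forall>x\<in>Vn n. \<forall>y\<in>Vn n. \<forall>z\<in>Vn n. b (x + y) z = b x z + b y z \<and> b x (y + z) = b x y + b x z) \<and>
     (\<forall>x\<in>Vn n. \<forall>y\<in>Vn n. \<forall>c. b (sc c x) y = sc c (b x y) \<and> b x (sc c y) = sc c (b x y)) \<and>
     (\<forall>x\<in>Vn n. b x x = 0) \<and>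
     (\<forall>x\<in>Vn n. \<forall>y\<in>Vn n. \<forall>z\<in>Vn n. b x (b y z) + b y (b z x) + b z (b x y) = 0)"

fun lcs :: "nat \<Rightarrow> ((nat \<Rightarrow> 'a::field) \<Rightarrow> (nat \<Rightarrow> 'a) \<Rightarrow> (nat \<Rightarrow> 'a)) \<Rightarrow> nat \<Rightarrow> (nat \<Rightarrow> 'a) set" where
  "lcs n b 0 = Vn n"
| "lcs n b (Suc 0) = Vn n"
| "lcs n b (Suc (Suc k)) = span_n {b x y | x y. x \<in> Vn n \<and> y \<in> lcs n b (Suc k)}"

definition nilpotent_lie :: "nat \<Rightarrow> ((nat \<Rightarrow> 'a::field) \<Rightarrow> (nat \<Rightarrow> 'a) \<Rightarrow> (nat \<Rightarrow> 'a)) \<Rightarrow> bool" where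
  "nilpotent_lie n b \<longleftrightarrow> (\<exists>k\<ge>1. lcs n b k = {0})"

definition filiform :: "nat \<Rightarrow> ((nat \<Rightarrow> 'a::field) \<Rightarrow> (nat \<Rightarrow> 'a) \<Rightarrow> (nat \<Rightarrow> 'a)) \<Rightarrow> bool" where
  "filiform n b \<longleftrightarrow> is_lie_bracket n b \<and> nilpotent_lie n b \<and>
     (\<forall>k. 2 \<le> k \<and> k \<le> n \<longrightarrow> dim_n (lcs n b k) = n - k)"

definition lin_functional :: "nat \<Rightarrow> ((nat \<Rightarrow> 'a::field) \<Rightarrow> 'a) \<Rightarrow> bool" where
  "lin_functional n l \<longleftrightarrow>
     (\<forall>x\<in>Vn n. \<forall>y\<in>Vn n. l (x + y) = l x + l y) \<and>
     (\<forall>x\<in>Vn n. \<forall>c. l (sc c x) = c * l x)"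

definition stabilizer :: "nat \<Rightarrow> ((nat \<Rightarrow> 'a::field) \<Rightarrow> (nat \<Rightarrow> 'a) \<Rightarrow> (nat \<Rightarrow> 'a)) \<Rightarrow> ((nat \<Rightarrow> 'a) \<Rightarrow> 'a) \<Rightarrow> (nat \<Rightarrow> 'a) set" where
  "stabilizer n b l = {y \<in> Vn n. \<forall>x\<in>Vn n. l (b x y) = 0}"

definition chi :: "nat \<Rightarrow> ((nat \<Rightarrow> 'a::field) \<Rightarrow> (nat \<Rightarrow> 'a) \<Rightarrow> (nat \<Rightarrow> 'a)) \<Rightarrow> nat" where
  "chi n b = Min {dim_n (stabilizer n b l) | l. lin_functional n l}"

end

theory Submission
  imports Defs
begin

lemma sc_vs: "vector_space (sc :: 'a::field \<Rightarrow> (nat \<Rightarrow> 'a) \<Rightarrow> (nat \<Rightarrow> 'a))"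
  by unfold_locales (auto simp: sc_def fun_eq_iff algebra_simps)

interpretation V: vector_space "sc :: 'a::field \<Rightarrow> (nat \<Rightarrow> 'a) \<Rightarrow> (nat \<Rightarrow> 'a)"
  by (rule sc_vs)

lemma sum_fun_apply: "(\<Sum>a\<in>A. f a) x = (\<Sum>a\<in>A. f a x)"
  by (induction A rule: infinite_finite_induct) auto

lemma sc_apply[simp]: "sc c x i = c * x i"
  by (simp add: sc_def)

definition ev :: "nat \<Rightarrow> nat \<Rightarrow> 'a::field" where
  "ev j = (\<lambda>i. if i = j then 1 else 0)"

lemma ev_apply[simp]: "ev j i = (if i = j then 1 else 0)"
  by (simp add: ev_def)

lemma coord_indep:
  fixes E :: "(nat \<Rightarrow> 'a::field) set"
  assumes "\<And>v. v \<in> E \<Longrightarrow> v (idx v) = 1"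
    and "\<And>v w. v \<in> E \<Longrightarrow> w \<in> E \<Longrightarrow> w \<noteq> v \<Longrightarrow> w (idx v) = 0"
  shows "V.independent E"
proof
  assume "V.dependent E"
  then obtain t u v where t: "finite t" "t \<subseteq> E" "(\<Sum>v\<in>t. sc (u v) v) = 0"
    and v: "v \<in> t" "u v \<noteq> 0" unfolding V.dependent_explicit by blast
  have vE: "v \<in> E" using t(2) v(1) by blast
  have "0 = (\<Sum>w\<in>t. sc (u w) w) (idx v)" using t(3) by simp
  also have "\<dots> = (\<Sum>w\<in>t. u w * w (idx v))" by (simp add: sum_fun_apply)
  also have "\<dots> = u v * v (idx v) + (\<Sum>w\<in>t-{v}. u w * w (idx v))"
    by (rule sum.remove[OF t(1) v(1)])
  also have "(\<Sum>w\<in>t-{v}. u w * w (idx v)) = 0"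
  proof (rule sum.neutral, rule ballI)
    fix w assume "w \<in> t - {v}"
    then have "w \<in> E" "w \<noteq> v" using t(2) by auto
    then show "u w * w (idx v) = 0" using assms(2)[OF vE] by simp
  qed
  also have "v (idx v) = 1" using assms(1)[OF vE] .
  finally have "u v = 0" by simp
  then show False using v(2) by contradiction
qed

lemma Vn_sum:
  assumes "x \<in> Vn n"
  shows "x = (\<Sum>q<n. sc (x q) (ev q))"
proof
  fix i
  have "(\<Sum>q<n. sc (x q) (ev q)) i = (\<Sum>q<n. if q = i then x q else 0)"
    unfolding sum_fun_apply by (rule sum.cong) auto
  also have "\<dots> = (if i < n then x i else 0)"
    using sum.delta[of "{..<n}" i x] by simp
  also have "\<dots> = x i" using assms by (auto simp: Vn_def)
  finally show "x i = (\<Sum>q<n. sc (x q) (ev q)) i" by simp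
qed

lemma Vn_sub: "V.subspace (Vn n)"
  unfolding V.subspace_def Vn_def by auto

lemma Vn_span: "Vn n \<subseteq> V.span (ev ` {..<n})"
proof
  fix x :: "nat \<Rightarrow> 'a::field" assume x: "x \<in> Vn n"
  have "(\<Sum>q<n. sc (x q) (ev q)) \<in> V.span (ev ` {..<n})"
    by (intro V.span_sum V.span_scale V.span_base) auto
  then show "x \<in> V.span (ev ` {..<n})" using Vn_sum[OF x] by simp
qed

lemma coord_indep_img:
  fixes g :: "nat \<Rightarrow> nat \<Rightarrow> 'a::field"
  assumes "\<And>j. j \<in> A \<Longrightarrow> g j (h j) = 1"
    and "\<And>j k. j \<in> A \<Longrightarrow> k \<in> A \<Longrightarrow> g k \<noteq> g j \<Longrightarrow> g k (h j) = 0"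
  shows "V.independent (g ` A)"
proof (rule coord_indep[where idx = "\<lambda>v. h (inv_into A g v)"])
  fix v assume "v \<in> g ` A"
  then obtain j where j: "j \<in> A" "v = g j" by auto
  then have "inv_into A g v \<in> A" "g (inv_into A g v) = v"
    by (auto intro: inv_into_into f_inv_into_f)
  then show "v (h (inv_into A g v)) = 1" using assms(1) by metis
next
  fix v w assume "v \<in> g ` A" "w \<in> g ` A" "w \<noteq> v"
  then obtain j k where j: "j \<in> A" "v = g j" "k \<in> A" "w = g k" by auto
  then have "inv_into A g v \<in> A" "g (inv_into A g v) = v"
    by (auto intro: inv_into_into f_inv_into_f)
  then show "w (h (inv_into A g v)) = 0" using assms(2) j \<open>w \<noteq> v\<close> by metis
qed

lemma ev_indep: "V.independent ((ev :: nat \<Rightarrow> nat \<Rightarrow> 'a::field) ` A)"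
  by (rule coord_indep_img[where h = id]) (auto simp: fun_eq_iff)

lemma ev_inj: "inj (ev :: nat \<Rightarrow> nat \<Rightarrow> 'a::field)"
  by (auto simp: inj_def fun_eq_iff split: if_splits)

lemma card_ev: "card ((ev :: nat \<Rightarrow> nat \<Rightarrow> 'a::field) ` A) = card A"
  by (metis card_image ev_inj inj_on_subset subset_UNIV)

lemma card_le_dim:
  fixes S E :: "(nat \<Rightarrow> 'a::field) set"
  assumes "S \<subseteq> Vn n" "E \<subseteq> S" "V.independent E"
  shows "card E \<le> V.dim S"
proof -
  obtain B where B: "B \<subseteq> S" "V.independent B" "S \<subseteq> V.span B" "card B = V.dim S"
    by (rule V.basis_exists)
  have "B \<subseteq> V.span (ev ` {..<n})" using B(1) assms(1) Vn_span by blast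
  then have "finite B" using V.independent_span_bound[OF _ B(2)] by blast
  moreover have "E \<subseteq> V.span B" using assms(2) B(3) by blast
  ultimately show ?thesis using V.independent_span_bound[OF _ assms(3)] B(4) by metis
qed

lemma dim_le_n:
  fixes S :: "(nat \<Rightarrow> 'a::field) set"
  assumes "S \<subseteq> Vn n" shows "V.dim S \<le> n"
proof -
  have "V.dim S \<le> card ((ev :: nat \<Rightarrow> nat \<Rightarrow> 'a) ` {..<n})"
    using assms Vn_span by (intro V.dim_le_card) auto
  then show ?thesis by (simp add: card_ev)
qed

definition om :: "nat \<Rightarrow> (nat \<Rightarrow> 'a::field) \<Rightarrow> (nat \<Rightarrow> 'a) \<Rightarrow> 'a" where
  "om T x y = (\<Sum>a\<in>{1..<T}. (-1)^a * x a * y (T - a))"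

definition brk :: "nat \<Rightarrow> nat \<Rightarrow> (nat \<Rightarrow> 'a::field) \<Rightarrow> (nat \<Rightarrow> 'a) \<Rightarrow> (nat \<Rightarrow> 'a)" where
  "brk n T x y = (\<lambda>k. (if 2 \<le> k \<and> k < n then x 0 * y (k-1) - y 0 * x (k-1) else 0)
      + (if k = n - 1 then om T x y else 0))"

definition qq :: "nat \<Rightarrow> (nat \<Rightarrow> 'a::field) \<Rightarrow> (nat \<Rightarrow> 'a) \<Rightarrow> 'a" where
  "qq T x y = (\<Sum>a\<in>{1..<T-1}. (-1)^a * x a * y (T - 1 - a))"

lemma om_add_left: "om T (x + y) z = om T x z + om T y z"
  by (simp add: om_def algebra_simps sum.distrib)
lemma om_add_right: "om T x (y + z) = om T x y + om T x z"
  by (simp add: om_def algebra_simps sum.distrib)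
lemma om_sc_left: "om T (sc c x) y = c * om T x y"
  by (simp add: om_def sum_distrib_left algebra_simps)
lemma om_sc_right: "om T x (sc c y) = c * om T x y"
  by (simp add: om_def sum_distrib_left algebra_simps)

lemma om_alt:
  assumes "CHAR('a::field) = 0" "odd T"
  shows "om T (x :: nat \<Rightarrow> 'a) x = 0"
proof -
  have "om T x x = (\<Sum>a\<in>{1..<T}. (-1)^(T-a) * x (T-a) * x (T - (T - a)))"
    unfolding om_def
    by (rule sum.reindex_bij_witness[where i = "\<lambda>a. T - a" and j = "\<lambda>a. T - a"]) auto
  also have "\<dots> = - om T x x"
    unfolding om_def sum_negf[symmetric]
  proof (rule sum.cong)
    fix a assume a: "a \<in> {1..<T}"
    have "(-1::'a)^(T-a) = - ((-1)^a)"
    proof -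
      have eq: "(T - a) + a = T" using a by auto
      have p: "even (T - a) = odd a" using eq assms even_add[of "T - a" a] by argo
      show ?thesis unfolding minus_one_power_iff p by simp
    qed
    then show "(-1)^(T-a) * x (T-a) * x (T - (T - a)) = - ((-1)^a * x a * x (T - a))"
      using a by (simp add: algebra_simps)
  qed simp
  finally have "om T x x = - om T x x" .
  then have h: "om T x x + om T x x = 0" by (rule eq_neg_iff_add_eq_0[THEN iffD1])
  have h2: "2 * om T x x = 0" using mult_2[of "om T x x"] h by (rule trans)
  have "(of_nat 2::'a) \<noteq> 0"
    unfolding of_nat_eq_0_iff_char_dvd using assms(1) by simp
  then have "(2::'a) \<noteq> 0" by simp
  then show ?thesis using h2 by (metis mult_eq_0_iff)
qed

lemma qq_sym:
  assumes "odd T"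
  shows "qq T (x :: nat \<Rightarrow> 'a::field) y = qq T y x"
proof -
  have "qq T x y = (\<Sum>a\<in>{1..<T-1}. (-1)^(T-1-a) * x (T-1-a) * y (T - 1 - (T-1-a)))"
    unfolding qq_def
    by (rule sum.reindex_bij_witness[where i = "\<lambda>a. T - 1 - a" and j = "\<lambda>a. T - 1 - a"]) auto
  also have "\<dots> = qq T y x"
    unfolding qq_def
  proof (rule sum.cong)
    fix a assume a: "a \<in> {1..<T-1}"
    have "(-1::'a)^(T-1-a) = (-1)^a"
    proof -
      have eq: "(T - 1 - a) + a = T - 1" using a by auto
      have "even (T - 1)" using assms by presburger
      then have p: "even (T - 1 - a) = even a" using even_add[of "T - 1 - a" a] unfolding eq by blast
      show ?thesis unfolding minus_one_power_iff p by (rule refl)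
    qed
    moreover have "T - 1 - (T - 1 - a) = a" using a by auto
    ultimately show "(-1)^(T-1-a) * x (T-1-a) * y (T - 1 - (T - 1 - a)) = (-1)^a * y a * x (T - 1 - a)"
      by (simp add: algebra_simps)
  qed simp
  finally show ?thesis .
qed


lemma brk_apply: "brk n T x y k = (if 2 \<le> k \<and> k < n then x 0 * y (k-1) - y 0 * x (k-1) else 0)
      + (if k = n - 1 then om T x y else 0)"
  by (simp add: brk_def)

definition Wk :: "nat \<Rightarrow> nat \<Rightarrow> (nat \<Rightarrow> 'a::field) set" where
  "Wk n k = {x \<in> Vn n. \<forall>j<k. x j = 0}"

lemma Wk_sub: "V.subspace (Wk n k)"
  unfolding V.subspace_def Wk_def Vn_def by auto

lemma ev_Wk: "ev ` {k..<n} \<subseteq> Wk n k"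
  by (auto simp: Wk_def Vn_def)

lemma Wk_span: "Wk n k \<subseteq> V.span (ev ` {k..<n})"
proof
  fix x :: "nat \<Rightarrow> 'a" assume x: "x \<in> Wk n k"
  then have xv: "x \<in> Vn n" by (simp add: Wk_def)
  have "(\<Sum>q<n. sc (x q) (ev q)) \<in> V.span (ev ` {k..<n})"
  proof (rule V.span_sum)
    fix q assume q: "q \<in> {..<n}"
    show "sc (x q) (ev q) \<in> V.span (ev ` {k..<n})"
    proof (cases "q < k")
      case True
      then have "x q = 0" using x by (simp add: Wk_def)
      then have "sc (x q) (ev q) = 0" by (simp add: fun_eq_iff)
      then show ?thesis by (metis V.span_zero)
    next
      case False
      then show ?thesis using q by (intro V.span_scale V.span_base) auto
    qed
  qed
  then show "x \<in> V.span (ev ` {k..<n})" using Vn_sum[OF xv] by simp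
qed

lemma dim_Wk: "V.dim (Wk n k :: (nat \<Rightarrow> 'a::field) set) = n - k"
  by (rule V.dim_unique[OF ev_Wk Wk_span ev_indep]) (simp add: card_ev)

lemma Wk_n: "Wk n n = {0}"
  by (auto simp: Wk_def Vn_def fun_eq_iff) (meson not_le)

lemma Vn_add: "x \<in> Vn n \<Longrightarrow> y \<in> Vn n \<Longrightarrow> x + y \<in> Vn n"
  by (simp add: Vn_def)
lemma Vn_sc: "x \<in> Vn n \<Longrightarrow> sc c x \<in> Vn n"
  by (simp add: Vn_def)
lemma Vn_ev: "j < n \<Longrightarrow> ev j \<in> Vn n"
  by (simp add: Vn_def)
lemma Vn_sum_mem: "(\<And>q. q \<in> F \<Longrightarrow> u q \<in> Vn n) \<Longrightarrow> (\<Sum>q\<in>F. u q) \<in> Vn n"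
  by (simp add: Vn_def sum_fun_apply)

lemma lin_zero:
  assumes lin: "lin_functional n f" shows "f 0 = 0"
proof -
  have z: "0 \<in> Vn n" by (simp add: Vn_def)
  from lin z have "f (0 + 0) = f 0 + f 0" unfolding lin_functional_def by blast
  then show "f 0 = 0" by (simp only: add_0 add_cancel_right_right)
qed

lemma lin_sc: "lin_functional n f \<Longrightarrow> x \<in> Vn n \<Longrightarrow> f (sc c x) = c * f x"
  unfolding lin_functional_def by blast

lemma lin_add: "lin_functional n f \<Longrightarrow> x \<in> Vn n \<Longrightarrow> y \<in> Vn n \<Longrightarrow> f (x + y) = f x + f y"
  unfolding lin_functional_def by blast

lemma lin_sum:
  assumes lin: "lin_functional n f" and u: "\<And>q. q \<in> F \<Longrightarrow> u q \<in> Vn n"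
  shows "f (\<Sum>q\<in>F. u q) = (\<Sum>q\<in>F. f (u q))"
  using u
proof (induction F rule: infinite_finite_induct)
  case (infinite A) then show ?case using lin_zero[OF lin] by (metis sum.infinite)
next
  case empty then show ?case using lin_zero[OF lin] by (metis sum.empty)
next
  case (insert x F)
  have "f (\<Sum>q\<in>insert x F. u q) = f (u x + (\<Sum>q\<in>F. u q))"
    by (simp only: sum.insert[OF insert.hyps])
  also have "\<dots> = f (u x) + f (\<Sum>q\<in>F. u q)"
    by (rule lin_add[OF lin]) (use insert.prems Vn_sum_mem[of F u n] in auto)
  also have "\<dots> = f (u x) + (\<Sum>q\<in>F. f (u q))"
    by (metis insert.IH insert.prems insertCI)
  also have "\<dots> = (\<Sum>q\<in>insert x F. f (u q))"
    by (simp only: sum.insert[OF insert.hyps])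
  finally show ?case .
qed

lemma hyper_B:
  fixes f :: "(nat \<Rightarrow> 'a::field) \<Rightarrow> 'a"
  assumes lin: "lin_functional n f" and p: "p \<in> {t..<n}" and fp: "f (ev p) \<noteq> 0"
  defines "g \<equiv> \<lambda>q. ev q + sc (- (f (ev q) / f (ev p))) (ev p)"
  defines "H \<equiv> {v \<in> Vn n. (\<forall>k<t. v k = 0) \<and> f v = 0}"
  shows "g ` ({t..<n} - {p}) \<subseteq> H" "V.independent (g ` ({t..<n} - {p}))"
    "card (g ` ({t..<n} - {p})) + 1 = n - t" "H \<subseteq> V.span (g ` ({t..<n} - {p}))"
proof -
  let ?Q = "{t..<n} - {p}"
  have gapp: "g q i = (if i = q then 1 else 0) - (f (ev q) / f (ev p)) * (if i = p then 1 else 0)" for q i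
    by (simp add: g_def)
  have gV: "g q \<in> Vn n" if "q \<in> ?Q" for q
    using that p unfolding g_def by (intro Vn_add Vn_sc Vn_ev) auto
  have fg: "f (g q) = 0" if "q \<in> ?Q" for q
  proof -
    have e1: "ev q \<in> Vn n" "ev p \<in> Vn n" using that p by (auto intro: Vn_ev)
    have "f (g q) = f (ev q) + f (sc (- (f (ev q) / f (ev p))) (ev p))"
      unfolding g_def using e1 by (intro lin_add[OF lin] Vn_sc)
    also have "\<dots> = f (ev q) + (- (f (ev q) / f (ev p))) * f (ev p)"
      by (simp only: lin_sc[OF lin e1(2)])
    also have "\<dots> = 0" using fp by simp
    finally show ?thesis .
  qed
  show "g ` ?Q \<subseteq> H"
    using gV fg p by (auto simp: H_def gapp)
  show "V.independent (g ` ?Q)"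
  proof (rule coord_indep_img[where h = id])
    fix j assume "j \<in> ?Q" then show "g j (id j) = 1" by (simp add: gapp)
  next
    fix j k assume "j \<in> ?Q" "k \<in> ?Q" "g k \<noteq> g j"
    then have "k \<noteq> j" by auto
    then show "g k (id j) = 0" using \<open>j \<in> ?Q\<close> by (simp add: gapp)
  qed
  have inj: "inj_on g ?Q"
  proof
    fix a b assume ab: "a \<in> ?Q" "b \<in> ?Q" "g a = g b"
    then have "g a a = g b a" by simp
    then show "a = b" using ab(1,2) by (auto simp: gapp split: if_splits)
  qed
  show "card (g ` ?Q) + 1 = n - t"
  proof -
    have c: "card (g ` ?Q) = card ?Q" by (rule card_image[OF inj])
    have "card ?Q = n - t - 1" using p by simp
    moreover have "t < n" using p by simp
    ultimately show ?thesis using c by simp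
  qed
  show "H \<subseteq> V.span (g ` ?Q)"
  proof
    fix v assume v: "v \<in> H"
    define S where "S = (\<Sum>q\<in>?Q. sc (v q) (g q))"
    have SV: "S \<in> Vn n" unfolding S_def using gV by (intro Vn_sum_mem Vn_sc) auto
    have vV: "v \<in> Vn n" and vt: "\<And>k. k < t \<Longrightarrow> v k = 0" and fv: "f v = 0"
      using v by (auto simp: H_def)
    define u where "u = v + sc (-1) S"
    have uV: "u \<in> Vn n" unfolding u_def using vV SV by (intro Vn_add Vn_sc)
    have Si: "S i = (if i \<in> ?Q then v i else 0)" if "i \<noteq> p" for i
    proof -
      have "S i = (\<Sum>q\<in>?Q. if q = i then v q else 0)"
        unfolding S_def sum_fun_apply by (rule sum.cong) (use that in \<open>auto simp: gapp\<close>)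
      also have "\<dots> = (if i \<in> ?Q then v i else 0)" by (rule sum.delta) simp
      finally show ?thesis .
    qed
    have ui: "u i = 0" if "i \<noteq> p" for i
    proof -
      have "v i = (if i \<in> ?Q then v i else 0)"
        using vV vt that by (auto simp: Vn_def)
      then show ?thesis unfolding u_def using Si[OF that] by simp
    qed
    have ueq: "u = sc (u p) (ev p)"
      by (rule ext) (auto simp: ui)
    have "f S = (\<Sum>q\<in>?Q. f (sc (v q) (g q)))"
      unfolding S_def using gV by (intro lin_sum[OF lin] Vn_sc) auto
    also have "\<dots> = 0" using fg gV by (simp add: lin_sc[OF lin])
    finally have fS: "f S = 0" .
    have "f u = f v + f (sc (-1) S)" unfolding u_def using vV SV by (intro lin_add[OF lin] Vn_sc)
    also have "\<dots> = f v + (-1) * f S" by (simp only: lin_sc[OF lin SV])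
    finally have "f u = 0" using fv fS by simp
    then have "f (sc (u p) (ev p)) = 0" using ueq by metis
    moreover have "p < n" using p by simp
    ultimately have "u p * f (ev p) = 0" using lin_sc[OF lin Vn_ev[of p n], of "u p"] by simp
    then have "u p = 0" using fp by simp
    then have "u = sc 0 (ev p)" using ueq by metis
    then have "u = 0" by (simp add: fun_eq_iff)
    then have "v = S" unfolding u_def by (simp add: fun_eq_iff)
    moreover have "S \<in> V.span (g ` ?Q)"
      unfolding S_def by (intro V.span_sum V.span_scale V.span_base) auto
    ultimately show "v \<in> V.span (g ` ?Q)" by simp
  qed
qed

lemma hyper_lower:
  fixes f :: "(nat \<Rightarrow> 'a::field) \<Rightarrow> 'a"
  assumes lin: "lin_functional n f"
  shows "\<exists>E. E \<subseteq> {v \<in> Vn n. (\<forall>k<t. v k = 0) \<and> f v = 0} \<and> V.independent E \<and> n - t \<le> card E + 1"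
proof (cases "\<exists>p\<in>{t..<n}. f (ev p) \<noteq> 0")
  case True
  then obtain p where "p \<in> {t..<n}" "f (ev p) \<noteq> 0" by blast
  from hyper_B[OF lin this] show ?thesis by (intro exI conjI) (auto simp del: atLeastLessThan_iff)
next
  case False
  show ?thesis
  proof (intro exI conjI)
    show "ev ` {t..<n} \<subseteq> {v \<in> Vn n. (\<forall>k<t. v k = 0) \<and> f v = 0}"
      using False by (auto simp: Vn_def)
    show "V.independent (ev ` {t..<n} :: (nat \<Rightarrow> 'a) set)" by (rule ev_indep)
    show "n - t \<le> card (ev ` {t..<n} :: (nat \<Rightarrow> 'a) set) + 1" by (simp add: card_ev)
  qed
qed

definition lz :: "nat \<Rightarrow> nat \<Rightarrow> (nat \<Rightarrow> 'a::field) \<Rightarrow> 'a" where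
  "lz n T w = w (n - 1) + (if T + 1 < n - 1 then w (T + 1) else 0)"

context
  fixes n T :: nat
  assumes n3: "3 \<le> n" and Todd: "odd T" and Tn: "T \<le> n - 2"
begin

lemma brk_Vn: "brk n T x y \<in> Vn n"
  using n3 by (auto simp: Vn_def brk_apply)

lemma brk_add_left: "brk n T (x + y) z = brk n T x z + brk n T y z"
  by (auto simp: fun_eq_iff brk_apply om_add_left algebra_simps)
lemma brk_add_right: "brk n T x (y + z) = brk n T x y + brk n T x z"
  by (auto simp: fun_eq_iff brk_apply om_add_right algebra_simps)
lemma brk_sc_left: "brk n T (sc c x) y = sc c (brk n T x y)"
  by (auto simp: fun_eq_iff brk_apply om_sc_left algebra_simps)
lemma brk_sc_right: "brk n T x (sc c y) = sc c (brk n T x y)"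
  by (auto simp: fun_eq_iff brk_apply om_sc_right algebra_simps)

lemma brk_alt:
  assumes "CHAR('a::field) = 0"
  shows "brk n T (x :: nat \<Rightarrow> 'a) x = 0"
  using om_alt[OF assms Todd] by (auto simp: fun_eq_iff brk_apply)

lemma om_brk: "om T x (brk n T y z) = y 0 * qq T x z - z 0 * qq T x y"
proof -
  have "om T x (brk n T y z) = (\<Sum>a\<in>{1..<T}. if a < T - 1 then
      (-1)^a * x a * (y 0 * z (T - 1 - a) - z 0 * y (T - 1 - a)) else 0)"
    unfolding om_def
  proof (rule sum.cong)
    fix a assume a: "a \<in> {1..<T}"
    then have "T - a \<noteq> n - 1" "T - a < n" using Tn n3 by auto
    moreover have "T - a - 1 = T - 1 - a" by simp
    moreover have "2 \<le> T - a \<longleftrightarrow> a < T - 1" using a by auto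
    ultimately show "(-1)^a * x a * brk n T y z (T - a) = (if a < T - 1 then
      (-1)^a * x a * (y 0 * z (T - 1 - a) - z 0 * y (T - 1 - a)) else 0)"
      by (simp add: brk_apply)
  qed simp
  also have "\<dots> = (\<Sum>a\<in>{a\<in>{1..<T}. a < T - 1}.
      (-1)^a * x a * (y 0 * z (T - 1 - a) - z 0 * y (T - 1 - a)))"
    by (rule sum.inter_filter[symmetric]) simp
  also have "{a\<in>{1..<T}. a < T - 1} = {1..<T-1}" by auto
  finally show ?thesis
    by (simp add: qq_def sum_distrib_left sum_subtractf[symmetric] algebra_simps)
qed

lemma brk_0: "brk n T y z 0 = 0"
  using n3 by (simp add: brk_apply)

lemma brk_low: "k < n - 1 \<Longrightarrow> brk n T y z k = (if 2 \<le> k then y 0 * z (k-1) - z 0 * y (k-1) else 0)"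
  by (simp add: brk_apply)

lemma brk_brk: "brk n T x (brk n T y z) = (\<lambda>k.
   (if 2 \<le> k \<and> k < n then x 0 * (if 3 \<le> k then y 0 * z (k-2) - z 0 * y (k-2) else 0) else 0)
   + (if k = n - 1 then y 0 * qq T x z - z 0 * qq T x y else 0))"
proof
  fix k
  show "brk n T x (brk n T y z) k = (if 2 \<le> k \<and> k < n then x 0 * (if 3 \<le> k then y 0 * z (k-2) - z 0 * y (k-2) else 0) else 0)
   + (if k = n - 1 then y 0 * qq T x z - z 0 * qq T x y else 0)"
  proof (cases "2 \<le> k \<and> k < n")
    case True
    then have "k - 1 < n - 1" by auto
    moreover have "k - 1 - 1 = k - 2" by simp
    moreover have "2 \<le> k - 1 \<longleftrightarrow> 3 \<le> k" by auto
    ultimately have w: "brk n T y z (k-1) = (if 3 \<le> k then y 0 * z (k-2) - z 0 * y (k-2) else 0)"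
      by (simp add: brk_low)
    show ?thesis unfolding brk_apply[of n T x] om_brk using True w by (simp add: brk_0)
  next
    case False
    then have "k \<noteq> n - 1" using n3 by auto
    then show ?thesis unfolding brk_apply[of n T x] om_brk using False by auto
  qed
qed

lemma brk_jacobi: "brk n T x (brk n T y z) + brk n T y (brk n T z x) + brk n T z (brk n T x y) = 0"
proof (rule ext)
  fix k
  show "(brk n T x (brk n T y z) + brk n T y (brk n T z x) + brk n T z (brk n T x y)) k = 0 k"
    unfolding plus_fun_apply zero_fun_apply brk_brk qq_sym[OF Todd, of z y] qq_sym[OF Todd, of y x] qq_sym[OF Todd, of x z]
    by (cases "2 \<le> k \<and> k < n"; cases "3 \<le> k"; cases "k = n - 1") (simp_all add: algebra_simps)
qed

lemma brk_lie:
  assumes "CHAR('a::field) = 0"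
  shows "is_lie_bracket n (brk n T :: (nat \<Rightarrow> 'a) \<Rightarrow> _)"
  unfolding is_lie_bracket_def
  by (simp add: brk_Vn brk_add_left brk_add_right brk_sc_left brk_sc_right brk_alt[OF assms] brk_jacobi)


lemma brk_W2: "brk n T x y \<in> Wk n 2"
  using brk_Vn n3 by (auto simp: Wk_def brk_apply)

lemma brk_Wk:
  assumes k: "2 \<le> k" and y: "y \<in> Wk n k"
  shows "brk n T x y \<in> Wk n (Suc k)"
proof -
  have y0: "\<And>j. j < k \<Longrightarrow> y j = 0" using y by (simp add: Wk_def)
  have "brk n T x y j = 0" if j: "j < Suc k" for j
  proof -
    have A: "(if 2 \<le> j \<and> j < n then x 0 * y (j-1) - y 0 * x (j-1) else 0) = 0"
      using j k y0[of 0] y0[of "j-1"] by auto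
    have B: "om T x y = 0" if "n - 1 < Suc k"
      unfolding om_def
    proof (rule sum.neutral, rule ballI)
      fix a assume "a \<in> {1..<T}"
      then have "T - a < k" using that Tn n3 by auto
      then show "(-1)^a * x a * y (T - a) = 0" using y0 by simp
    qed
    show ?thesis unfolding brk_apply using A B j by auto
  qed
  then show ?thesis using brk_Vn by (simp add: Wk_def)
qed

lemma brk_ev:
  assumes "1 \<le> j" "Suc j < n"
  shows "brk n T (ev 0) (ev j) = (ev (Suc j) :: nat \<Rightarrow> 'a::field)"
proof -
  have "om T (ev 0) (ev j :: nat \<Rightarrow> 'a) = 0"
    unfolding om_def by (rule sum.neutral) auto
  then show ?thesis using assms by (auto simp: fun_eq_iff brk_apply)
qed

lemma span_step:
  assumes k: "1 \<le> k"
    and Y1: "\<And>x y. x \<in> Vn n \<Longrightarrow> y \<in> Y \<Longrightarrow> brk n T x y \<in> Wk n (Suc k)"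
    and Y2: "\<And>j. k \<le> j \<Longrightarrow> Suc j < n \<Longrightarrow> (ev j :: nat \<Rightarrow> 'a::field) \<in> Y"
  shows "V.span {brk n T x y | x y. x \<in> Vn n \<and> y \<in> Y} = Wk n (Suc k)"
proof
  show "V.span {brk n T x y | x y. x \<in> Vn n \<and> y \<in> Y} \<subseteq> Wk n (Suc k)"
    using Y1 by (intro V.span_minimal Wk_sub) blast
next
  have "ev ` {Suc k..<n} \<subseteq> {brk n T x y | x y. x \<in> Vn n \<and> y \<in> Y}"
  proof
    fix v assume "v \<in> (ev ` {Suc k..<n} :: (nat \<Rightarrow> 'a) set)"
    then obtain q where q: "Suc k \<le> q" "q < n" "v = ev q" by auto
    then obtain j where j: "q = Suc j" "k \<le> j" by (cases q) auto
    have "brk n T (ev 0) (ev j) = (ev (Suc j) :: nat \<Rightarrow> 'a)" using q j k by (intro brk_ev) auto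
    then have "v = brk n T (ev 0) (ev j)" using q j by simp
    moreover have "ev 0 \<in> Vn n" using n3 by (simp add: Vn_def)
    moreover have "ev j \<in> Y" using Y2 j q by simp
    ultimately show "v \<in> {brk n T x y | x y. x \<in> Vn n \<and> y \<in> Y}" by blast
  qed
  then have "V.span (ev ` {Suc k..<n}) \<subseteq> V.span {brk n T x y | x y. x \<in> Vn n \<and> y \<in> Y}"
    by (rule V.span_mono)
  then show "Wk n (Suc k) \<subseteq> V.span {brk n T x y | x y. x \<in> Vn n \<and> y \<in> Y}"
    using Wk_span by blast
qed

lemma lcs_eq: "lcs n (brk n T :: (nat \<Rightarrow> 'a::field) \<Rightarrow> _) (Suc (Suc m)) = Wk n (Suc (Suc m))"
proof (induction m)
  case 0
  have "lcs n (brk n T :: (nat \<Rightarrow> 'a::field) \<Rightarrow> _) (Suc (Suc 0))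
      = V.span {brk n T x y | x y. x \<in> Vn n \<and> y \<in> Vn n}"
    by (simp add: span_n_def)
  also have "\<dots> = Wk n (Suc 1)"
  proof (rule span_step)
    fix x y :: "nat \<Rightarrow> 'a"
    show "brk n T x y \<in> Wk n (Suc 1)" using brk_W2[of x y] by (simp add: numeral_2_eq_2)
  next
    fix j assume "Suc j < n" then show "(ev j :: nat \<Rightarrow> 'a) \<in> Vn n" by (auto simp: Vn_def)
  qed simp
  finally show ?case by simp
next
  case (Suc m)
  have "lcs n (brk n T :: (nat \<Rightarrow> 'a::field) \<Rightarrow> _) (Suc (Suc (Suc m)))
      = V.span {brk n T x y | x y. x \<in> Vn n \<and> y \<in> Wk n (Suc (Suc m))}"
    using Suc.IH by (simp add: span_n_def)
  also have "\<dots> = Wk n (Suc (Suc (Suc m)))"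
  proof (rule span_step)
    fix x y :: "nat \<Rightarrow> 'a" assume "y \<in> Wk n (Suc (Suc m))"
    then show "brk n T x y \<in> Wk n (Suc (Suc (Suc m)))" by (intro brk_Wk) auto
  next
    fix j assume "Suc (Suc m) \<le> j" "Suc j < n"
    then show "(ev j :: nat \<Rightarrow> 'a) \<in> Wk n (Suc (Suc m))" by (auto simp: Wk_def Vn_def)
  qed simp
  finally show ?case .
qed

lemma lcs_eq2: "2 \<le> k \<Longrightarrow> lcs n (brk n T :: (nat \<Rightarrow> 'a::field) \<Rightarrow> _) k = Wk n k"
  using lcs_eq[of "k - 2"] by (simp add: numeral_2_eq_2 Suc_diff_Suc)

lemma brk_filiform:
  assumes "CHAR('a::field) = 0"
  shows "filiform n (brk n T :: (nat \<Rightarrow> 'a) \<Rightarrow> _)"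
  unfolding filiform_def nilpotent_lie_def
proof (intro conjI allI impI)
  show "is_lie_bracket n (brk n T :: (nat \<Rightarrow> 'a) \<Rightarrow> _)" by (rule brk_lie[OF assms])
  show "\<exists>k\<ge>1. lcs n (brk n T :: (nat \<Rightarrow> 'a) \<Rightarrow> _) k = {0}"
    using lcs_eq2[of n] Wk_n n3 by (intro exI[of _ n]) auto
  fix k assume "2 \<le> k \<and> k \<le> n"
  then show "dim_n (lcs n (brk n T :: (nat \<Rightarrow> 'a) \<Rightarrow> _) k) = n - k"
    by (simp add: dim_n_def lcs_eq2 dim_Wk)
qed


lemma T1: "1 \<le> T" using Todd by (cases T) auto

lemma brk_e0_lin:
  assumes lin: "lin_functional n l"
  shows "lin_functional n (\<lambda>v. l (brk n T (ev 0) v))"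
  unfolding lin_functional_def
proof (intro conjI ballI allI)
  fix x y :: "nat \<Rightarrow> 'a" assume "x \<in> Vn n" "y \<in> Vn n"
  show "l (brk n T (ev 0) (x + y)) = l (brk n T (ev 0) x) + l (brk n T (ev 0) y)"
    unfolding brk_add_right by (rule lin_add[OF lin brk_Vn brk_Vn])
next
  fix x :: "nat \<Rightarrow> 'a" and c assume "x \<in> Vn n"
  show "l (brk n T (ev 0) (sc c x)) = c * l (brk n T (ev 0) x)"
    unfolding brk_sc_right by (rule lin_sc[OF lin brk_Vn])
qed

lemma brk_K:
  assumes v: "\<And>k. k < T \<Longrightarrow> v k = 0"
  shows "brk n T x v = sc (x 0) (brk n T (ev 0) (v :: nat \<Rightarrow> 'a::field))"
proof -
  have v0: "v 0 = 0" using v T1 by simp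
  have om0: "om T w v = 0" for w :: "nat \<Rightarrow> 'a"
    unfolding om_def by (rule sum.neutral) (auto simp: v)
  show ?thesis by (rule ext) (simp add: brk_apply om0 v0 algebra_simps)
qed

lemma K_sub_stab:
  assumes lin: "lin_functional n l"
  shows "{v \<in> Vn n. (\<forall>k<T. v k = 0) \<and> l (brk n T (ev 0) v) = 0} \<subseteq> stabilizer n (brk n T) l"
proof
  fix v :: "nat \<Rightarrow> 'a" assume "v \<in> {v \<in> Vn n. (\<forall>k<T. v k = 0) \<and> l (brk n T (ev 0) v) = 0}"
  then have v: "v \<in> Vn n" "\<And>k. k < T \<Longrightarrow> v k = 0" "l (brk n T (ev 0) v) = 0" by auto
  have "l (brk n T x v) = 0" if "x \<in> Vn n" for x
  proof -
    have "brk n T x v = sc (x 0) (brk n T (ev 0) v)" by (rule brk_K) (rule v(2))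
    then have "l (brk n T x v) = x 0 * l (brk n T (ev 0) v)" using lin_sc[OF lin brk_Vn] by simp
    then show ?thesis using v(3) by simp
  qed
  then show "v \<in> stabilizer n (brk n T) l" using v(1) by (simp add: stabilizer_def)
qed

lemma stab_sub_Vn: "stabilizer n b l \<subseteq> Vn n"
  by (auto simp: stabilizer_def)

lemma stab_lower:
  assumes lin: "lin_functional n (l :: (nat \<Rightarrow> 'a::field) \<Rightarrow> 'a)"
  shows "n - T - 1 \<le> dim_n (stabilizer n (brk n T) l)"
proof -
  obtain E where E: "E \<subseteq> {v \<in> Vn n. (\<forall>k<T. v k = 0) \<and> l (brk n T (ev 0) v) = 0}"
    "V.independent E" "n - T \<le> card E + 1"
    using hyper_lower[OF brk_e0_lin[OF lin], of T] by blast
  have "card E \<le> V.dim (stabilizer n (brk n T) l)"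
    by (rule card_le_dim[OF stab_sub_Vn _ E(2)]) (use E(1) K_sub_stab[OF lin] in blast)
  then show ?thesis using E(3) by (simp add: dim_n_def)
qed

lemma lz_lin: "lin_functional n (lz n T :: (nat \<Rightarrow> 'a::field) \<Rightarrow> 'a)"
  by (simp add: lin_functional_def lz_def algebra_simps)

lemma lz_ev_top: "lz n T (ev (n - 1) :: nat \<Rightarrow> 'a::field) = 1"
  using n3 by (simp add: lz_def)

lemma brk_evT: "brk n T (ev T) y = sc (- y 0) (ev (T + 1) :: nat \<Rightarrow> 'a::field)"
proof -
  have om0: "om T (ev T) y = 0"
    unfolding om_def by (rule sum.neutral) auto
  show ?thesis using T1 Tn n3 by (auto simp: fun_eq_iff brk_apply om0)
qed

lemma brk_evj:
  assumes j: "1 \<le> j" "j < T" and y0: "y 0 = 0"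
  shows "brk n T (ev j) y = sc ((-1)^j * y (T - j)) (ev (n - 1) :: nat \<Rightarrow> 'a::field)"
proof -
  have "om T (ev j) y = (\<Sum>a\<in>{1..<T}. if a = j then (-1)^a * y (T - a) else 0)"
    unfolding om_def by (rule sum.cong) auto
  also have "\<dots> = (-1)^j * y (T - j)" using j by (subst sum.delta) auto
  finally have om: "om T (ev j) y = (-1)^j * y (T - j)" .
  show ?thesis using j y0 by (auto simp: fun_eq_iff brk_apply om)
qed

lemma stab_lz: "stabilizer n (brk n T) (lz n T) \<subseteq>
   {v \<in> Vn n. (\<forall>k<T. v k = 0) \<and> lz n T (brk n T (ev 0) v) = (0::'a::field)}"
proof
  fix y :: "nat \<Rightarrow> 'a" assume "y \<in> stabilizer n (brk n T) (lz n T)"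
  then have yV: "y \<in> Vn n" and st: "\<And>x. x \<in> Vn n \<Longrightarrow> lz n T (brk n T x y) = 0"
    by (auto simp: stabilizer_def)
  have "lz n T (brk n T (ev T) y) = 0" using st Tn n3 by (intro st Vn_ev) auto
  moreover have "lz n T (brk n T (ev T) y) = - y 0"
    unfolding brk_evT using Tn n3 by (auto simp: lz_def)
  ultimately have y0: "y 0 = 0" by simp
  have yk: "y k = 0" if k: "k < T" for k
  proof (cases "k = 0")
    case True then show ?thesis using y0 by simp
  next
    case False
    define j where "j = T - k"
    have j: "1 \<le> j" "j < T" "T - j = k" using k False by (auto simp: j_def)
    have "lz n T (brk n T (ev j) y) = 0" using j Tn n3 by (intro st Vn_ev) auto
    moreover have "lz n T (brk n T (ev j) y) = (-1)^j * y k"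
      unfolding brk_evj[of j y, OF j(1,2) y0] j(3)
      using n3 by (simp add: lz_def)
    ultimately show ?thesis by simp
  qed
  have "lz n T (brk n T (ev 0) y) = 0" using n3 by (intro st Vn_ev) auto
  then show "y \<in> {v \<in> Vn n. (\<forall>k<T. v k = 0) \<and> lz n T (brk n T (ev 0) v) = 0}"
    using yV yk by auto
qed

lemma stab_upper: "dim_n (stabilizer n (brk n T) (lz n T :: (nat \<Rightarrow> 'a::field) \<Rightarrow> 'a)) \<le> n - T - 1"
proof -
  let ?f = "\<lambda>v. lz n T (brk n T (ev 0) v) :: 'a"
  have p: "n - 2 \<in> {T..<n}" using Tn n3 by auto
  have e: "Suc (n - 2) = n - 1" "1 \<le> n - 2" "Suc (n - 2) < n" using n3 by auto
  have "brk n T (ev 0) (ev (n - 2)) = (ev (Suc (n - 2)) :: nat \<Rightarrow> 'a)"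
    by (rule brk_ev) (use e in auto)
  then have "brk n T (ev 0) (ev (n - 2)) = (ev (n - 1) :: nat \<Rightarrow> 'a)"
    unfolding e(1) .
  then have fp: "?f (ev (n - 2)) \<noteq> 0" using lz_ev_top[where 'a='a] by simp
  note B = hyper_B[OF brk_e0_lin[OF lz_lin] p fp]
  let ?E = "(\<lambda>q. ev q + sc (- (?f (ev q) / ?f (ev (n - 2)))) (ev (n - 2))) ` ({T..<n} - {n - 2})"
  have sub: "stabilizer n (brk n T) (lz n T :: (nat \<Rightarrow> 'a) \<Rightarrow> 'a) \<subseteq> V.span ?E" using B(4) stab_lz by blast
  have fin: "finite ?E" by simp
  have "V.dim (stabilizer n (brk n T) (lz n T :: (nat \<Rightarrow> 'a) \<Rightarrow> 'a)) \<le> card ?E"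
    by (rule V.dim_le_card[OF sub fin])
  moreover have "card ?E + 1 = n - T" by (rule B(3))
  ultimately show ?thesis unfolding dim_n_def by linarith
qed

lemma brk_chi: "chi n (brk n T :: (nat \<Rightarrow> 'a::field) \<Rightarrow> _) = n - T - 1"
  unfolding chi_def
proof (rule Min_eqI)
  let ?A = "{dim_n (stabilizer n (brk n T) l) |l. lin_functional n (l :: (nat \<Rightarrow> 'a) \<Rightarrow> 'a)}"
  have "?A \<subseteq> {..n}"
    using dim_le_n[OF stab_sub_Vn] by (auto simp: dim_n_def)
  then show "finite ?A" by (rule finite_subset) simp
  show "\<And>y. y \<in> ?A \<Longrightarrow> n - T - 1 \<le> y" using stab_lower by blast
  have "dim_n (stabilizer n (brk n T) (lz n T :: (nat \<Rightarrow> 'a) \<Rightarrow> 'a)) = n - T - 1"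
    using stab_upper stab_lower[OF lz_lin] by (rule antisym)
  then show "n - T - 1 \<in> ?A" using lz_lin by force
qed

end

theorem corollary6p8:
  fixes n i :: nat
  assumes "CHAR('a::field) = 0"
    and "n \<ge> 3"
    and "i \<ge> 1" and "i \<le> n - 2" and "even (n - i)"
  shows "\<exists>b :: (nat \<Rightarrow> 'a) \<Rightarrow> (nat \<Rightarrow> 'a) \<Rightarrow> (nat \<Rightarrow> 'a).
           filiform n b \<and> chi n b = i"
proof -
  define T where "T = n - i - 1"
  have T: "odd T" "T \<le> n - 2" "n - T - 1 = i"
    using assms(2-5) unfolding T_def by presburger+
  show ?thesis
    using brk_filiform[OF assms(2) T(1) T(2) assms(1)] brk_chi[OF assms(2) T(1) T(2)] T(3)
    by metis
qed

end
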